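(* Let $A$ be a partially ordered set and $G,H,K$ games over $A$. Then: (a) if $G\lhd H$ and $H\le K$ then $G\lhd K$; (b) if $G\le H$ and $H\lhd K$ then $G\lhd K$; (c) if $G\le H$ and $H\le K$ then $G\le K$.
   Context: Games over a poset $A$ are defined inductively: for each $a\in A$ there is an atomic game $[a]$, which has no options; and if $L$ and $R$ are non-empty sets of games, then $\{L\mid R\}$ is a composite game with left options $L$ and right options $R$. The relations $\le$ and $\lhd$ are defined by simultaneous recursion: $G\le H$ iff (1) every left option $G^L$ of $G$ satisfies $G^L\lhd H$, (2) every right option $H^R$ of $H$ satisfies $G\lhd H^R$, and (3) if $G$ or $H$ is atomic then $G\lhd H$; and $G\lhd H$ iff (1) some right option $G^R$ of $G$ satisfies $G^R\le H$, or (2) some left option $H^L$ of $H$ satisfies $G\le H^L$, or (3) $G=[a]$, $H=[b]$ are atomic and $a\le b$. *)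

theory Defs
  imports Main
begin

text \<open>A composite game {L | R} is represented by a set of
  left indices with a labelling function and a set of right indices with a labelling
  function (type 'i of indices is arbitrary); the actual option sets are the images.\<close>

datatype ('a, 'i) game =
    Atom 'a
  | Comp "'i set" "'i \<Rightarrow> ('a, 'i) game" "'i set" "'i \<Rightarrow> ('a, 'i) game"

fun lopts :: "('a, 'i) game \<Rightarrow> ('a, 'i) game set" where
  "lopts (Atom a) = {}"
| "lopts (Comp IL fL IR fR) = fL ` IL"

fun ropts :: "('a, 'i) game \<Rightarrow> ('a, 'i) game set" where
  "ropts (Atom a) = {}"
| "ropts (Comp IL fL IR fR) = fR ` IR"

fun is_atom :: "('a, 'i) game \<Rightarrow> bool" where
  "is_atom (Atom a) = True"
| "is_atom (Comp IL fL IR fR) = False"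

inductive wf_game :: "('a, 'i) game \<Rightarrow> bool" where
  "wf_game (Atom a)"
| "IL \<noteq> {} \<Longrightarrow> IR \<noteq> {} \<Longrightarrow> (\<forall>i\<in>IL. wf_game (fL i)) \<Longrightarrow> (\<forall>i\<in>IR. wf_game (fR i))
     \<Longrightarrow> wf_game (Comp IL fL IR fR)"

text \<open>The relations \<le> and \<lhd> (simultaneous recursion; since games are well-founded the
  least fixed point coincides with the recursive definition).\<close>
inductive game_le :: "('a::order, 'i) game \<Rightarrow> ('a, 'i) game \<Rightarrow> bool"
  and game_lf :: "('a::order, 'i) game \<Rightarrow> ('a, 'i) game \<Rightarrow> bool" where
  le_intro: "(\<forall>GL\<in>lopts G. game_lf GL H) \<Longrightarrow> (\<forall>HR\<in>ropts H. game_lf G HR)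
     \<Longrightarrow> (is_atom G \<or> is_atom H \<longrightarrow> game_lf G H) \<Longrightarrow> game_le G H"
| lf_right: "GR \<in> ropts G \<Longrightarrow> game_le GR H \<Longrightarrow> game_lf G H"
| lf_left: "HL \<in> lopts H \<Longrightarrow> game_le G HL \<Longrightarrow> game_lf G H"
| lf_atom: "a \<le> b \<Longrightarrow> game_lf (Atom a) (Atom b)"

end

theory Submission
  imports Defs
begin

lemma le_iff: "game_le G H \<longleftrightarrow> (\<forall>GL\<in>lopts G. game_lf GL H) \<and> (\<forall>HR\<in>ropts H. game_lf G HR)
     \<and> (is_atom G \<or> is_atom H \<longrightarrow> game_lf G H)"
  by (auto intro: game_le_game_lf.intros elim: game_le.cases)

lemma lf_iff: "game_lf G H \<longleftrightarrow> (\<exists>GR\<in>ropts G. game_le GR H) \<or> (\<exists>HL\<in>lopts H. game_le G HL)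
     \<or> (\<exists>a b. G = Atom a \<and> H = Atom b \<and> a \<le> b)"
  by (auto intro: game_le_game_lf.intros elim: game_lf.cases)

lemma le_lf_L: "game_le G H \<Longrightarrow> GL \<in> lopts G \<Longrightarrow> game_lf GL H"
  by (simp add: le_iff)
lemma le_lf_R: "game_le G H \<Longrightarrow> HR \<in> ropts H \<Longrightarrow> game_lf G HR"
  by (simp add: le_iff)
lemma le_lf_atom: "game_le G H \<Longrightarrow> is_atom G \<or> is_atom H \<Longrightarrow> game_lf G H"
  by (simp add: le_iff)
lemma le_lf_atom1: "game_le (Atom a) H \<Longrightarrow> game_lf (Atom a) H"
  by (simp add: le_iff)
lemma le_lf_atom2: "game_le G (Atom a) \<Longrightarrow> game_lf G (Atom a)"
  by (simp add: le_iff)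

definition opts :: "('a, 'i) game \<Rightarrow> ('a, 'i) game set" where
  "opts G = lopts G \<union> ropts G"

definition P3 :: "('a::order, 'i) game \<Rightarrow> ('a, 'i) game \<Rightarrow> ('a, 'i) game \<Rightarrow> bool" where
  "P3 G H K \<longleftrightarrow> (game_lf G H \<and> game_le H K \<longrightarrow> game_lf G K)
       \<and> (game_le G H \<and> game_lf H K \<longrightarrow> game_lf G K)
       \<and> (game_le G H \<and> game_le H K \<longrightarrow> game_le G K)"

lemma P3a: "P3 G H K \<Longrightarrow> game_lf G H \<Longrightarrow> game_le H K \<Longrightarrow> game_lf G K"
  unfolding P3_def by blast
lemma P3b: "P3 G H K \<Longrightarrow> game_le G H \<Longrightarrow> game_lf H K \<Longrightarrow> game_lf G K"
  unfolding P3_def by blast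
lemma P3c: "P3 G H K \<Longrightarrow> game_le G H \<Longrightarrow> game_le H K \<Longrightarrow> game_le G K"
  unfolding P3_def by blast
lemma optsL: "x \<in> lopts G \<Longrightarrow> x \<in> opts G" by (simp add: opts_def)
lemma optsR: "x \<in> ropts G \<Longrightarrow> x \<in> opts G" by (simp add: opts_def)

lemma atom_le: "(a::'a::order) \<le> b \<Longrightarrow> game_le (Atom a) (Atom b)"
  by (rule le_intro) (auto intro: lf_atom)

lemma step:
  fixes G H K :: "('a::order, 'i) game"
  assumes IG: "\<And>G' H K. G' \<in> opts G \<Longrightarrow> P3 G' H K"
    and IH: "\<And>H' K. H' \<in> opts H \<Longrightarrow> P3 G H' K"
    and IK: "\<And>K'. K' \<in> opts K \<Longrightarrow> P3 G H K'"
  shows "P3 G H K"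
proof -
  have a: "game_lf G K" if "game_lf G H" "game_le H K"
  proof -
    from that(1) consider (r) GR where "GR \<in> ropts G" "game_le GR H"
      | (l) HL where "HL \<in> lopts H" "game_le G HL"
      | (at) a b where "G = Atom a" "H = Atom b" "a \<le> b"
      unfolding lf_iff by blast
    then show ?thesis
    proof cases
      case r
      then have "game_le GR K" using P3c[OF IG[OF optsR[OF r(1)]]] that(2) by blast
      then show ?thesis using r by (meson game_le_game_lf.intros)
    next
      case l
      then have "game_lf HL K" using that(2) by (meson le_lf_L le_lf_R le_lf_atom is_atom.simps)
      then show ?thesis using P3b[OF IH[OF optsL[OF l(1)]] l(2)] by blast
    next
      case at
      then have "game_lf H K" using that(2) by (meson le_lf_L le_lf_R le_lf_atom is_atom.simps)
      then consider (kl) KL where "KL \<in> lopts K" "game_le H KL"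
        | (kc) c where "K = Atom c" "b \<le> c"
        using at unfolding lf_iff by auto
      then show ?thesis
      proof cases
        case kl
        have "game_le G H" using at atom_le by simp
        then have "game_le G KL" using P3c[OF IK[OF optsL[OF kl(1)]]] kl(2) by blast
        then show ?thesis using kl by (meson game_le_game_lf.intros)
      next
        case kc
        then show ?thesis using at by (auto intro!: lf_atom dest: order_trans)
      qed
    qed
  qed
  have b: "game_lf G K" if "game_le G H" "game_lf H K"
  proof -
    from that(2) consider (r) HR where "HR \<in> ropts H" "game_le HR K"
      | (l) KL where "KL \<in> lopts K" "game_le H KL"
      | (at) b c where "H = Atom b" "K = Atom c" "b \<le> c"
      unfolding lf_iff by blast
    then show ?thesis
    proof cases
      case r
      then have "game_lf G HR" using that(1) by (meson le_lf_L le_lf_R le_lf_atom is_atom.simps)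
      then show ?thesis using P3a[OF IH[OF optsR[OF r(1)]]] r(2) by blast
    next
      case l
      then have "game_le G KL" using P3c[OF IK[OF optsL[OF l(1)]] that(1) l(2)] by blast
      then show ?thesis using l by (meson game_le_game_lf.intros)
    next
      case at
      then have "game_lf G H" using that(1) by (meson le_lf_L le_lf_R le_lf_atom is_atom.simps)
      then consider (gr) GR where "GR \<in> ropts G" "game_le GR H"
        | (ga) a where "G = Atom a" "a \<le> b"
        using at unfolding lf_iff by auto
      then show ?thesis
      proof cases
        case gr
        have "game_le H K" using at atom_le by simp
        then have "game_le GR K" using P3c[OF IG[OF optsR[OF gr(1)]] gr(2)] by blast
        then show ?thesis using gr by (meson game_le_game_lf.intros)
      next
        case ga
        then show ?thesis using at by (auto intro!: lf_atom dest: order_trans)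
      qed
    qed
  qed
  have c: "game_le G K" if "game_le G H" "game_le H K"
  proof -
    have 1: "\<forall>GL\<in>lopts G. game_lf GL K"
    proof
      fix GL assume gl: "GL \<in> lopts G"
      then have "game_lf GL H" using that(1) by (rule le_lf_L[rotated])
      then show "game_lf GL K" using P3a[OF IG[OF optsL[OF gl]]] that(2) by blast
    qed
    have 2: "\<forall>KR\<in>ropts K. game_lf G KR"
    proof
      fix KR assume kr: "KR \<in> ropts K"
      then have "game_lf H KR" using that(2) by (rule le_lf_R[rotated])
      then show "game_lf G KR" using P3b[OF IK[OF optsR[OF kr]]] that(1) by blast
    qed
    have 3: "game_lf G K" if at: "is_atom G \<or> is_atom K"
    proof (cases "is_atom G")
      case True
      then have "game_lf G H" using \<open>game_le G H\<close> by (meson le_lf_L le_lf_R le_lf_atom is_atom.simps)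
      then consider (hl) HL where "HL \<in> lopts H" "game_le G HL"
        | (hb) a b where "G = Atom a" "H = Atom b" "a \<le> b"
        using True unfolding lf_iff by (cases G) auto
      then show ?thesis
      proof cases
        case hl
        then have "game_lf HL K" using \<open>game_le H K\<close> by (meson le_lf_L le_lf_R le_lf_atom is_atom.simps)
        then show ?thesis using P3b[OF IH[OF optsL[OF hl(1)]] hl(2)] by blast
      next
        case hb
        then have "game_lf H K" using \<open>game_le H K\<close> by (meson le_lf_L le_lf_R le_lf_atom is_atom.simps)
        then consider (kl) KL where "KL \<in> lopts K" "game_le H KL"
          | (kc) c where "K = Atom c" "b \<le> c"
          using hb unfolding lf_iff by auto
        then show ?thesis
        proof cases
          case kl
          then have "game_le G KL" using P3c[OF IK[OF optsL[OF kl(1)]] \<open>game_le G H\<close>] by blast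
          then show ?thesis using kl by (meson game_le_game_lf.intros)
        next
          case kc
          then show ?thesis using hb by (auto intro!: lf_atom dest: order_trans)
        qed
      qed
    next
      case False
      then have Ka: "is_atom K" using at by simp
      then have "game_lf H K" using \<open>game_le H K\<close> by (meson le_lf_L le_lf_R le_lf_atom is_atom.simps)
      then consider (hr) HR where "HR \<in> ropts H" "game_le HR K"
        | (hb) b c where "H = Atom b" "K = Atom c" "b \<le> c"
        using Ka unfolding lf_iff by (cases K) auto
      then show ?thesis
      proof cases
        case hr
        then have "game_lf G HR" using \<open>game_le G H\<close> by (meson le_lf_L le_lf_R le_lf_atom is_atom.simps)
        then show ?thesis using P3a[OF IH[OF optsR[OF hr(1)]]] hr(2) by blast
      next
        case hb
        then have "game_lf G H" using \<open>game_le G H\<close> by (meson le_lf_L le_lf_R le_lf_atom is_atom.simps)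
        then consider (gr) GR where "GR \<in> ropts G" "game_le GR H"
          | (ga) a where "G = Atom a" "a \<le> b"
          using hb unfolding lf_iff by auto
        then show ?thesis
        proof cases
          case gr
          then have "game_le GR K" using P3c[OF IG[OF optsR[OF gr(1)]] gr(2) \<open>game_le H K\<close>] by blast
          then show ?thesis using gr by (meson game_le_game_lf.intros)
        next
          case ga
          then show ?thesis using hb by (auto intro!: lf_atom dest: order_trans)
        qed
      qed
    qed
    show ?thesis using 1 2 3 by (simp add: le_iff)
  qed
  show ?thesis unfolding P3_def using a b c by blast
qed

lemma opts_sub: "opts (Comp IL fL IR fR) \<subseteq> range fL \<union> range fR"
  by (auto simp: opts_def)

lemma opts_atom: "opts (Atom a) = {}"
  by (simp add: opts_def)

lemma L3:
  fixes G H K :: "('a::order, 'i) game"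
  assumes A1: "\<And>G' H K. G' \<in> opts G \<Longrightarrow> P3 G' H K"
    and A2: "\<And>H' K. H' \<in> opts H \<Longrightarrow> P3 G H' K"
  shows "P3 G H K"
proof (induction K)
  case (Atom c)
  show ?case
  proof (rule step[OF A1 A2])
    show "P3 G H K'" if "K' \<in> opts (Atom c :: ('a, 'i) game)" for K' using that by (simp add: opts_def)
  qed
next
  case (Comp IL fL IR fR)
  show ?case
  proof (rule step[OF A1 A2])
    fix K' assume "K' \<in> opts (Comp IL fL IR fR)"
    then have "K' \<in> range fL \<or> K' \<in> range fR" using opts_sub[of IL fL IR fR] by blast
    then show "P3 G H K'"
    proof
      assume "K' \<in> range fL" then show ?thesis by (rule Comp.IH(1))
    next
      assume "K' \<in> range fR" then show ?thesis by (rule Comp.IH(2))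
    qed
  qed
qed

lemma L2:
  fixes G H K :: "('a::order, 'i) game"
  assumes A1: "\<And>G' H K. G' \<in> opts G \<Longrightarrow> P3 G' H K"
  shows "P3 G H K"
proof (induction H arbitrary: K)
  case (Atom c)
  show ?case
  proof (rule L3[OF A1])
    fix H' K' assume "H' \<in> opts (Atom c :: ('a, 'i) game)"
    then show "P3 G H' K'" by (simp add: opts_def)
  qed
next
  case (Comp IL fL IR fR)
  show ?case
  proof (rule L3[OF A1])
    fix H' K' assume "H' \<in> opts (Comp IL fL IR fR)"
    then have "H' \<in> range fL \<or> H' \<in> range fR" using opts_sub[of IL fL IR fR] by blast
    then show "P3 G H' K'"
    proof
      assume "H' \<in> range fL" then show ?thesis by (rule Comp.IH(1))
    next
      assume "H' \<in> range fR" then show ?thesis by (rule Comp.IH(2))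
    qed
  qed
qed

lemma all_P3:
  fixes G H K :: "('a::order, 'i) game"
  shows "P3 G H K"
proof (induction G arbitrary: H K)
  case (Atom c)
  show ?case
  proof (rule L2)
    fix G' H' K' assume "G' \<in> opts (Atom c :: ('a, 'i) game)"
    then show "P3 G' H' K'" by (simp add: opts_def)
  qed
next
  case (Comp IL fL IR fR)
  show ?case
  proof (rule L2)
    fix G' H' K' assume "G' \<in> opts (Comp IL fL IR fR)"
    then have "G' \<in> range fL \<or> G' \<in> range fR" using opts_sub[of IL fL IR fR] by blast
    then show "P3 G' H' K'"
    proof
      assume "G' \<in> range fL" then show ?thesis by (rule Comp.IH(1))
    next
      assume "G' \<in> range fR" then show ?thesis by (rule Comp.IH(2))
    qed
  qed
qed

theorem lemma4p6:
  fixes G H K :: "('a::order, 'i) game"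
  assumes "wf_game G" and "wf_game H" and "wf_game K"
  shows "(game_lf G H \<and> game_le H K \<longrightarrow> game_lf G K)
       \<and> (game_le G H \<and> game_lf H K \<longrightarrow> game_lf G K)
       \<and> (game_le G H \<and> game_le H K \<longrightarrow> game_le G K)"
  using all_P3[of G H K] unfolding P3_def .

end
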